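(* Let $\mathcal A\subseteq 2^\Pi\setminus\{\emptyset\}$ be a symmetric adversary. Then $\mathit{setcon}(\mathcal A)=|\{k\in\{1,\dots,n\}:\exists S\in\mathcal A,\ |S|=k\}|$.
   Context: An adversary is a set $\mathcal A\subseteq 2^\Pi$ of subsets (live sets) of the process set $\Pi=\{p_1,\dots,p_n\}$. It is symmetric if for all $S\in\mathcal A$ and all $S'\subseteq\Pi$ with $|S'|=|S|$, $S'\in\mathcal A$. $\mathcal A|_P=\{S\in\mathcal A: S\subseteq P\}$. The set consensus power is defined recursively by $\mathit{setcon}(\emptyset)=0$ and, for $\mathcal A\ne\emptyset$, $\mathit{setcon}(\mathcal A)=\max_{S\in\mathcal A}\min_{a\in S}\mathit{setcon}(\mathcal A|_{S\setminus\{a\}})+1$. *)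

theory Defs
  imports Main
begin

definition symmetric_adv :: "'a set \<Rightarrow> 'a set set \<Rightarrow> bool" where
  "symmetric_adv Pi A \<longleftrightarrow>
     (\<forall>S\<in>A. \<forall>S'. S' \<subseteq> Pi \<and> card S' = card S \<longrightarrow> S' \<in> A)"

definition restr :: "'a set set \<Rightarrow> 'a set \<Rightarrow> 'a set set" where
  "restr A P = {S\<in>A. S \<subseteq> P}"

(* setcon with explicit recursion fuel; the fuel card (Union A) + 1 is always
   sufficient for finite adversaries, since every recursive call restricts to a
   strictly smaller union of live sets. *)
fun setcon_fuel :: "nat \<Rightarrow> 'a set set \<Rightarrow> nat" where
  "setcon_fuel 0 A = 0"
| "setcon_fuel (Suc k) A =
     (if A = {} then 0
      else Max ((\<lambda>S. Min ((\<lambda>a. setcon_fuel k (restr A (S - {a}))) ` S) + 1) ` A))"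

definition setcon :: "'a set set \<Rightarrow> nat" where
  "setcon A = setcon_fuel (Suc (card (\<Union>A))) A"

end

theory Submission
  imports Defs
begin

locale symadv =
  fixes Pi :: "'a set" and A :: "'a set set"
  assumes fin: "finite Pi"
    and sub: "A \<subseteq> Pow Pi - {{}}"
    and sym: "symmetric_adv Pi A"
begin

definition c :: "nat \<Rightarrow> nat" where
  "c m = card {j \<in> {1..m}. \<exists>S\<in>A. card S = j}"

lemma c_mono: "m \<le> m' \<Longrightarrow> c m \<le> c m'"
  unfolding c_def by (rule card_mono) auto

lemma c_step: assumes "m \<ge> 1" "\<exists>S\<in>A. card S = m" shows "c m = c (m - 1) + 1"
proof -
  have "{j \<in> {1..m}. \<exists>S\<in>A. card S = j} = insert m {j \<in> {1..m-1}. \<exists>S\<in>A. card S = j}"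
    using assms by auto
  then show ?thesis unfolding c_def by simp
qed

lemma realize:
  assumes P: "P \<subseteq> Pi" and S: "S \<in> A" and le: "card S \<le> card P"
  shows "\<exists>T\<in>restr A P. card T = card S"
proof -
  obtain T where T: "T \<subseteq> P" "card T = card S" "finite T"
    using obtain_subset_with_card_n[OF le] by metis
  have "T \<in> A" using sym S T P unfolding symmetric_adv_def by blast
  then show ?thesis using T unfolding restr_def by auto
qed

lemma restr_fin: "P \<subseteq> Pi \<Longrightarrow> finite (restr A P)"
  by (rule finite_subset[of _ "Pow P"]) (auto simp: restr_def intro: finite_subset[OF _ fin])

lemma main:
  "\<forall>P. P \<subseteq> Pi \<longrightarrow> (\<forall>S\<in>restr A P. card S < k) \<longrightarrow> setcon_fuel k (restr A P) = c (card P)"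
proof (induction k)
  case 0
  show ?case
  proof (intro allI impI)
    fix P assume P: "P \<subseteq> Pi" and h: "\<forall>S\<in>restr A P. card S < (0::nat)"
    have "{j \<in> {1..card P}. \<exists>S\<in>A. card S = j} = {}"
      using realize[OF P] h by fastforce
    then show "setcon_fuel 0 (restr A P) = c (card P)" by (simp add: c_def)
  qed
next
  case (Suc k)
  show ?case
  proof (intro allI impI)
    fix P assume P: "P \<subseteq> Pi" and h: "\<forall>S\<in>restr A P. card S < Suc k"
    have finP: "finite P" using P fin finite_subset by blast
    show "setcon_fuel (Suc k) (restr A P) = c (card P)"
    proof (cases "restr A P = {}")
      case True
      have "{j \<in> {1..card P}. \<exists>S\<in>A. card S = j} = {}"
        using realize[OF P] True by fastforce
      then show ?thesis using True by (simp add: c_def)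
    next
      case False
      let ?R = "restr A P"
      have val: "Min ((\<lambda>a. setcon_fuel k (restr ?R (S - {a}))) ` S) + 1 = c (card S - 1) + 1"
        if S: "S \<in> ?R" for S
      proof -
        have SA: "S \<in> A" "S \<subseteq> P" using S by (auto simp: restr_def)
        have Sne: "S \<noteq> {}" using SA sub by auto
        have finS: "finite S" using SA finP finite_subset by blast
        have "setcon_fuel k (restr ?R (S - {a})) = c (card S - 1)" if a: "a \<in> S" for a
        proof -
          have eq: "restr ?R (S - {a}) = restr A (S - {a})" using SA by (auto simp: restr_def)
          have "\<forall>T\<in>restr A (S - {a}). card T < k"
          proof
            fix T assume "T \<in> restr A (S - {a})"
            then have "T \<subseteq> S - {a}" by (simp add: restr_def)
            then have "card T \<le> card (S - {a})" using finS by (intro card_mono) auto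
            also have "\<dots> = card S - 1" using a finS by simp
            finally have "card T \<le> card S - 1" .
            moreover have "card S < Suc k" using h S by blast
            moreover have "card S > 0" using Sne finS by (simp add: card_gt_0_iff)
            ultimately show "card T < k" by linarith
          qed
          then have "setcon_fuel k (restr A (S - {a})) = c (card (S - {a}))"
            using Suc.IH SA P by blast
          then show ?thesis using eq a finS by simp
        qed
        then have "(\<lambda>a. setcon_fuel k (restr ?R (S - {a}))) ` S = {c (card S - 1)}"
          using Sne by auto
        then show ?thesis by simp
      qed
      have fR: "finite ?R" using restr_fin[OF P] .
      obtain M where M: "M \<in> ?R" "\<forall>S\<in>?R. card S \<le> card M"
      proof -
        have "Max (card ` ?R) \<in> card ` ?R" using fR False by (intro Max_in) auto
        then obtain M where "M \<in> ?R" "card M = Max (card ` ?R)" by auto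
        moreover have "\<forall>S\<in>?R. card S \<le> Max (card ` ?R)" using fR by simp
        ultimately show ?thesis using that by metis
      qed
      have MA: "M \<in> A" "M \<subseteq> P" using M by (auto simp: restr_def)
      have M1: "card M \<ge> 1"
      proof -
        have "M \<noteq> {}" using MA sub by blast
        moreover have "finite M" using MA finP finite_subset by blast
        ultimately show ?thesis by (simp add: Suc_le_eq card_gt_0_iff)
      qed
      have cM: "c (card M) = c (card M - 1) + 1" using c_step[OF M1] MA by blast
      have cP: "c (card P) = c (card M)"
      proof -
        have "{j \<in> {1..card P}. \<exists>S\<in>A. card S = j} = {j \<in> {1..card M}. \<exists>S\<in>A. card S = j}"
        proof (intro set_eqI iffI)
          fix j assume j: "j \<in> {j \<in> {1..card P}. \<exists>S\<in>A. card S = j}"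
          then obtain S where S: "S \<in> A" "card S = j" "card S \<le> card P" by auto
          then have "\<exists>T\<in>?R. card T = card S" using realize[OF P] by blast
          then obtain T where T: "T \<in> ?R" "card T = j" using S by auto
          have "j \<le> card M" using T M by auto
          then show "j \<in> {j \<in> {1..card M}. \<exists>S\<in>A. card S = j}" using j by auto
        next
          fix j assume "j \<in> {j \<in> {1..card M}. \<exists>S\<in>A. card S = j}"
          moreover have "card M \<le> card P" using MA finP card_mono by blast
          ultimately show "j \<in> {j \<in> {1..card P}. \<exists>S\<in>A. card S = j}" by auto
        qed
        then show ?thesis by (simp add: c_def)
      qed
      have "setcon_fuel (Suc k) ?R = Max ((\<lambda>S. c (card S - 1) + 1) ` ?R)"
      proof -
        have "setcon_fuel (Suc k) ?R = Max ((\<lambda>S. Min ((\<lambda>a. setcon_fuel k (restr ?R (S - {a}))) ` S) + 1) ` ?R)"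
          using False by (simp only: setcon_fuel.simps if_False)
        also have "\<dots> = Max ((\<lambda>S. c (card S - 1) + 1) ` ?R)"
          using val by (intro arg_cong[where f=Max] image_cong) auto
        finally show ?thesis .
      qed
      also have "\<dots> = c (card M - 1) + 1"
      proof (rule Max_eqI)
        show "finite ((\<lambda>S. c (card S - 1) + 1) ` ?R)" using fR by simp
        show "c (card M - 1) + 1 \<in> (\<lambda>S. c (card S - 1) + 1) ` ?R" using M by blast
        fix y assume "y \<in> (\<lambda>S. c (card S - 1) + 1) ` ?R"
        then obtain S where "S \<in> ?R" "y = c (card S - 1) + 1" by blast
        moreover have "card S - 1 \<le> card M - 1" using \<open>S \<in> ?R\<close> M by (simp add: diff_le_mono)
        ultimately show "y \<le> c (card M - 1) + 1" using c_mono by simp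
      qed
      also have "\<dots> = c (card P)" unfolding cP cM ..
      finally show ?thesis .
    qed
  qed
qed

end

theorem mainTheorem8:
  fixes Pi :: "'a set" and A :: "'a set set"
  assumes "finite Pi"
    and "A \<subseteq> Pow Pi - {{}}"
    and "symmetric_adv Pi A"
  shows "setcon A = card {k \<in> {1..card Pi}. \<exists>S\<in>A. card S = k}"
proof -
  interpret symadv Pi A using assms by unfold_locales
  have RA: "restr A Pi = A" using assms(2) by (auto simp: restr_def)
  have "\<forall>S\<in>restr A Pi. card S < Suc (card (\<Union>A))"
  proof
    fix S assume "S \<in> restr A Pi"
    then have "S \<in> A" using RA by simp
    moreover have "finite (\<Union>A)" 
    proof (rule finite_subset[OF _ assms(1)])
      show "\<Union>A \<subseteq> Pi" using assms(2) by blast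
    qed
    ultimately show "card S < Suc (card (\<Union>A))" by (simp add: Union_upper card_mono le_imp_less_Suc)
  qed
  then have "setcon_fuel (Suc (card (\<Union>A))) (restr A Pi) = c (card Pi)"
    using main by blast
  then show ?thesis unfolding setcon_def c_def using RA by simp
qed

end
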